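(* Let $\mathbf{E},\mathbf{F}$ be finite-dimensional Euclidean spaces, $\mathcal{K}\subset\mathbf{E}$ a proper cone, $\mathcal{A}:\mathbf{E}\to\mathbf{F}$ linear, $b\in\mathbf{F}$, $c\in\mathbf{E}$, and consider the conic program $\min\{\langle c,x\rangle : \mathcal{A}x=b,\ x\in\mathcal{K}\}$ with solution set $\mathcal{X}_\star$ and its dual $\max\{\langle b,y\rangle : c-\mathcal{A}^*y\in\mathcal{K}^*\}$ with solution set $\mathcal{Y}_\star$. Suppose strong duality holds, and suppose dual strict complementarity holds for a primal–dual solution pair $(x_\star,y_\star)\in\mathcal{X}_\star\times\mathcal{Y}_\star$ with slack $s_\star=c-\mathcal{A}^*y_\star$, i.e. $x_\star\in\mathrm{relint}(\mathcal{F}_{s_\star})$. Then there are constants $\gamma,\gamma'\ge 0$ such that for every $x\in\mathcal{V}_{s_\star}$, $$\mathrm{dist}(x,\mathcal{X}_\star)\le \gamma\|\mathcal{A}(x)-b\|_2+\gamma'\,\mathrm{dist}(x,\mathcal{F}_{s_\star}).$$ Moreover, if $\mathcal{X}_\star$ is a singleton, then one may take $\gamma'=0$ and $\gamma=1/\sigma_{\min}(\mathcal{A}_{\mathcal{V}_{s_\star}})$, where $\mathcal{A}_{\mathcal{V}_{s_\star}}$ is the restriction of $\mathcal{A}$ to $\mathcal{V}_{s_\star}$ and $\sigma_{\min}(\mathcal{A}_{\mathcal{V}_{s_\star}})=\min_{x\in\mathcal{V}_{s_\star},\|x\|_2=1}\|\mathcal{A}x\|_2$.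
   Context: $\mathcal{K}^*=\{s\in\mathbf{E}:\langle s,x\rangle\ge0\ \forall x\in\mathcal{K}\}$ is the dual cone. Strong duality means: $\mathcal{X}_\star$ and $\mathcal{Y}_\star$ are nonempty, $\mathcal{X}_\star$ is compact, and there is a pair $(x_\star,y_\star)\in\mathcal{X}_\star\times\mathcal{Y}_\star$ with $\langle c,x_\star\rangle=\langle b,y_\star\rangle$, equivalently $\langle s_\star,x_\star\rangle=0$ where $s_\star=c-\mathcal{A}^*y_\star$. For a dual solution $y_\star$ with $s_\star=c-\mathcal{A}^*y_\star$, the complementary face is $\mathcal{F}_{s_\star}=\{x\in\mathcal{K}:\langle x,s_\star\rangle=0\}$ and the complementary space is $\mathcal{V}_{s_\star}=\mathrm{aff}(\mathcal{F}_{s_\star})$ (a linear subspace). $\mathrm{dist}(x,C)=\inf_{z\in C}\|x-z\|_2$; $\mathrm{relint}$ denotes relative interior. *)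

theory Defs
  imports "HOL-Analysis.Analysis"
begin

definition proper_cone :: "'a::euclidean_space set \<Rightarrow> bool" where
  "proper_cone K \<longleftrightarrow> cone K \<and> convex K \<and> closed K \<and> interior K \<noteq> {} \<and>
     (\<forall>x. x \<in> K \<and> -x \<in> K \<longrightarrow> x = 0)"

definition dual_cone :: "'a::real_inner set \<Rightarrow> 'a set" where
  "dual_cone K = {s. \<forall>x\<in>K. s \<bullet> x \<ge> 0}"

definition primal_sol ::
  "('e::euclidean_space \<Rightarrow> 'f::euclidean_space) \<Rightarrow> 'f \<Rightarrow> 'e \<Rightarrow> 'e set \<Rightarrow> 'e set" where
  "primal_sol A b c K =
     {x. x \<in> K \<and> A x = b \<and> (\<forall>z. z \<in> K \<and> A z = b \<longrightarrow> c \<bullet> x \<le> c \<bullet> z)}"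

definition dual_sol ::
  "('e::euclidean_space \<Rightarrow> 'f::euclidean_space) \<Rightarrow> 'f \<Rightarrow> 'e \<Rightarrow> 'e set \<Rightarrow> 'f set" where
  "dual_sol A b c K =
     {y. c - adjoint A y \<in> dual_cone K \<and>
         (\<forall>y'. c - adjoint A y' \<in> dual_cone K \<longrightarrow> b \<bullet> y' \<le> b \<bullet> y)}"

definition comp_face :: "'a::real_inner set \<Rightarrow> 'a \<Rightarrow> 'a set" where
  "comp_face K s = {x \<in> K. x \<bullet> s = 0}"

definition comp_space :: "'a::real_inner set \<Rightarrow> 'a \<Rightarrow> 'a set" where
  "comp_space K s = affine hull (comp_face K s)"

definition sigma_min :: "('e::real_normed_vector \<Rightarrow> 'f::real_normed_vector) \<Rightarrow> 'e set \<Rightarrow> real" where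
  "sigma_min A V = Inf ((\<lambda>x. norm (A x)) ` {x \<in> V. norm x = 1})"

end

theory Submission
  imports Defs
begin


lemma right_inv_bound:
  fixes A :: "'e::euclidean_space \<Rightarrow> 'f::euclidean_space"
  assumes W: "subspace W" and lin: "linear A"
  shows "\<exists>\<kappa>>0. \<forall>v\<in>W. \<exists>w\<in>W. A w = A v \<and> norm w \<le> \<kappa> * norm (A v)"
proof -
  define N where "N = {v\<in>W. A v = 0}"
  define W' where "W' = {v\<in>W. \<forall>n\<in>N. v \<bullet> n = 0}"
  have subN: "subspace N" using W lin unfolding N_def subspace_def
    by (auto simp: linear_add linear_cmul linear_0)
  have subW': "subspace W'" using W unfolding W'_def subspace_def
    by (auto simp: inner_add_left)
  have clW': "closed W'" by (rule closed_subspace[OF subW'])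
  have inj: "\<forall>x\<in>W'. A x = 0 \<longrightarrow> x = 0"
    unfolding W'_def N_def by auto
  obtain e where e: "e > 0" "\<forall>x\<in>W'. norm (A x) \<ge> e * norm x"
    using injective_imp_isometric[OF clW' subW' _ inj] lin linear_conv_bounded_linear by blast
  show ?thesis
  proof (intro exI[of _ "1/e"] conjI ballI)
    show "1/e > 0" using e by simp
    fix v assume v: "v \<in> W"
    obtain y z where y: "y \<in> span N" and z: "\<And>w. w \<in> span N \<Longrightarrow> orthogonal z w" and vyz: "v = y + z"
      using orthogonal_subspace_decomp_exists by blast
    have spN: "span N = N" using subN by (simp add: span_eq_iff)
    have yN: "y \<in> N" using y spN by simp
    have zW: "z \<in> W" using vyz v yN W unfolding N_def
      by (metis (no_types, lifting) add_diff_cancel_left' mem_Collect_eq subspace_diff)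
    have zW': "z \<in> W'" using zW z spN unfolding W'_def orthogonal_def by auto
    have Az: "A z = A v" using vyz yN lin unfolding N_def by (simp add: linear_add)
    have "e * norm z \<le> norm (A v)" using e zW' Az by auto
    hence "norm z \<le> 1/e * norm (A v)" using e by (simp add: field_simps)
    thus "\<exists>w\<in>W. A w = A v \<and> norm w \<le> 1 / e * norm (A v)" using zW Az by blast
  qed
qed

lemma cone_bound_below:
  fixes A :: "'e::euclidean_space \<Rightarrow> 'f::euclidean_space"
  assumes cl: "closed F" and cn: "\<And>d c. d \<in> F \<Longrightarrow> c \<ge> 0 \<Longrightarrow> c *\<^sub>R d \<in> F"
    and lin: "linear A" and inj: "\<And>d. d \<in> F \<Longrightarrow> A d = 0 \<Longrightarrow> d = 0"
  shows "\<exists>\<mu>>0. \<forall>d\<in>F. \<mu> * norm d \<le> norm (A d)"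
proof -
  define S where "S = F \<inter> sphere 0 1"
  have norm_in: "(1 / norm d) *\<^sub>R d \<in> S" if "d \<in> F" "d \<noteq> 0" for d
    using that cn unfolding S_def by auto
  show ?thesis
  proof (cases "S = {}")
    case True
    have "d = 0" if "d \<in> F" for d using norm_in[OF that] True by blast
    hence "\<forall>d\<in>F. 1 * norm d \<le> norm (A d)" by force
    then show ?thesis by (intro exI[of _ 1]) simp
  next
    case False
    have "compact S" unfolding S_def by (rule closed_Int_compact[OF cl compact_sphere])
    moreover have "continuous_on S (\<lambda>d. norm (A d))"
      by (intro continuous_intros linear_continuous_on linear_conv_bounded_linear[THEN iffD1, OF lin])
    ultimately obtain d0 where d0: "d0 \<in> S" "\<forall>d\<in>S. norm (A d0) \<le> norm (A d)"
      using continuous_attains_inf[OF _ False] by blast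
    have pos: "norm (A d0) > 0" using d0 inj unfolding S_def by fastforce
    show ?thesis
    proof (intro exI[of _ "norm (A d0)"] conjI ballI pos)
      fix d assume d: "d \<in> F"
      show "norm (A d0) * norm d \<le> norm (A d)"
      proof (cases "d = 0")
        case True then show ?thesis by simp
      next
        case False
        have "norm (A d0) \<le> norm (A ((1 / norm d) *\<^sub>R d))" using d0 norm_in[OF d False] by blast
        also have "\<dots> = norm (A d) / norm d" using lin by (simp add: linear_cmul)
        finally show ?thesis using False by (simp add: field_simps)
      qed
    qed
  qed
qed


lemma core_bound:
  fixes A :: "'e::euclidean_space \<Rightarrow> 'f::euclidean_space"
  assumes cvx: "convex F" and lin: "linear A"
    and xsF: "xs \<in> F" and Axs: "A xs = b"
    and dpos: "\<delta> > 0" and ballF: "ball xs \<delta> \<inter> span F \<subseteq> F"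
    and kpos: "\<kappa> > 0" and rinv: "\<forall>v\<in>span F. \<exists>w\<in>span F. A w = A v \<and> norm w \<le> \<kappa> * norm (A v)"
    and mpos: "\<mu> > 0" and mu: "\<forall>d\<in>F. \<mu> * norm d \<le> norm (A d)"
  shows "\<exists>\<gamma>\<ge>0. \<forall>p\<in>F. infdist p {x\<in>F. A x = b} \<le> \<gamma> * norm (A p - b)"
proof -
  define C where "C = norm b / \<mu> + norm xs + \<delta>"
  define \<gamma> where "\<gamma> = 1/\<mu> + (\<kappa>/\<delta>) * C"
  have C0: "C \<ge> 0" unfolding C_def using mpos dpos by simp
  have g0: "\<gamma> \<ge> 0" unfolding \<gamma>_def using mpos dpos kpos C0 by simp
  show ?thesis
  proof (intro exI[of _ \<gamma>] conjI ballI g0)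
    fix p assume pF: "p \<in> F"
    define r where "r = norm (A p - b)"
    have r0: "r \<ge> 0" unfolding r_def by simp
    have "\<mu> * norm p \<le> norm (A p)" using mu pF by blast
    also have "\<dots> \<le> r + norm b" unfolding r_def by (metis add.commute diff_add_cancel norm_triangle_ineq)
    finally have np: "norm p \<le> (r + norm b) / \<mu>" using mpos by (simp add: field_simps)
    have vsp: "xs - p \<in> span F" using xsF pF by (simp add: span_base span_diff)
    obtain w where wsp: "w \<in> span F" and Aw: "A w = A (xs - p)" and nw: "norm w \<le> \<kappa> * norm (A (xs - p))"
      using rinv vsp by blast
    have Aw': "A w = b - A p" using Aw lin Axs by (simp add: linear_diff)
    have nw': "norm w \<le> \<kappa> * r" using nw Aw' unfolding r_def by (simp add: Aw norm_minus_commute)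
    show "infdist p {x\<in>F. A x = b} \<le> \<gamma> * r"
    proof (cases "r = 0")
      case True
      hence "p \<in> {x\<in>F. A x = b}" using pF unfolding r_def by simp
      hence "infdist p {x\<in>F. A x = b} \<le> dist p p" by (rule infdist_le)
      thus ?thesis using True by simp
    next
      case False
      hence rpos: "r > 0" using r0 by simp
      show ?thesis
      proof (cases "\<kappa> * r \<ge> \<delta>")
        case True
        have "infdist p {x\<in>F. A x = b} \<le> dist p xs" using xsF Axs by (intro infdist_le) simp
        also have "\<dots> \<le> norm p + norm xs" by (simp add: dist_norm norm_triangle_ineq4)
        also have "\<dots> \<le> r/\<mu> + C" using np unfolding C_def using dpos by (simp add: add_divide_distrib)
        also have "\<dots> \<le> r/\<mu> + (\<kappa> * r / \<delta>) * C"
        proof -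
          have "1 \<le> \<kappa> * r / \<delta>" using True dpos by simp
          hence "1 * C \<le> (\<kappa> * r / \<delta>) * C" using C0 by (intro mult_right_mono) auto
          thus ?thesis by simp
        qed
        also have "\<dots> = \<gamma> * r" unfolding \<gamma>_def by (simp add: field_simps)
        finally show ?thesis .
      next
        case False
        define l where "l = \<kappa> * r / \<delta>"
        have l0: "l > 0" unfolding l_def using kpos rpos dpos by simp
        have l1: "l < 1" unfolding l_def using False dpos by simp
        define y where "y = xs + ((1 - l) / l) *\<^sub>R w"
        have "norm (y - xs) = ((1 - l) / l) * norm w" unfolding y_def using l0 l1 by simp
        also have "\<dots> \<le> ((1 - l) / l) * (\<kappa> * r)" using nw' l0 l1 by (intro mult_left_mono) auto
        also have "\<dots> = (1 - l) * \<delta>" unfolding l_def using kpos rpos dpos by (simp add: field_simps)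
        also have "\<dots> < \<delta>" using l0 dpos by simp
        finally have ny: "norm (y - xs) < \<delta>" .
        have ysp: "y \<in> span F" unfolding y_def using wsp xsF by (simp add: span_base span_add span_scale)
        have yF: "y \<in> F" using ballF ysp ny by (auto simp: dist_norm norm_minus_commute)
        define z where "z = (1 - l) *\<^sub>R p + l *\<^sub>R y"
        have zF: "z \<in> F" unfolding z_def using cvx pF yF l0 l1 by (intro convexD) auto
        have "l *\<^sub>R y = l *\<^sub>R xs + (1 - l) *\<^sub>R w" unfolding y_def using l0 by (simp add: scaleR_add_right)
        hence ly: "l *\<^sub>R A y = l *\<^sub>R A xs + (1 - l) *\<^sub>R A w"
          using lin by (metis linear_add linear_cmul)
        have "A z = (1 - l) *\<^sub>R A p + l *\<^sub>R A y"
          unfolding z_def using lin by (simp add: linear_add linear_cmul)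
        hence "A z = (1 - l) *\<^sub>R A p + l *\<^sub>R A xs + (1 - l) *\<^sub>R A w" using ly by simp
        also have "\<dots> = (1 - l) *\<^sub>R (A p + A w) + l *\<^sub>R b" using Axs by (simp add: scaleR_right_distrib)
        also have "\<dots> = b" using Aw' by (simp add: scaleR_collapse)
        finally have Az: "A z = b" .
        have "infdist p {x\<in>F. A x = b} \<le> dist p z" using zF Az by (intro infdist_le) simp
        also have "dist p z = l * norm (p - y)" unfolding z_def dist_norm using l0
          by (metis (no_types, lifting) abs_of_pos add_diff_cancel_left' diff_add_eq norm_scaleR
               scaleR_collapse scaleR_right_diff_distrib)
        also have "\<dots> \<le> l * (norm p + norm xs + \<delta>)"
        proof -
          have "norm y \<le> norm xs + norm (y - xs)" by (metis add.commute diff_add_cancel norm_triangle_ineq)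
          hence "norm (p - y) \<le> norm p + norm xs + \<delta>" using ny norm_triangle_ineq4[of p y] by linarith
          thus ?thesis using l0 by (intro mult_left_mono) auto
        qed
        also have "\<dots> \<le> l * ((r + norm b) / \<mu> + norm xs + \<delta>)" using np l0 by (intro mult_left_mono) auto
        also have "\<dots> = l * (r / \<mu>) + l * C" unfolding C_def by (simp add: field_simps add_divide_distrib)
        also have "\<dots> \<le> r / \<mu> + l * C"
        proof -
          have "l * (r/\<mu>) \<le> 1 * (r/\<mu>)" using l1 rpos mpos by (intro mult_right_mono) auto
          thus ?thesis by simp
        qed
        also have "\<dots> = \<gamma> * r" unfolding \<gamma>_def l_def by (simp add: field_simps)
        finally show ?thesis .
      qed
    qed
  qed
qed


theorem lemma2:
  fixes K :: "'e::euclidean_space set"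
    and A :: "'e \<Rightarrow> 'f::euclidean_space"
    and b :: 'f and c :: 'e and xs :: 'e and ys :: 'f
  assumes cone: "proper_cone K"
    and lin: "linear A"
    and X_ne: "primal_sol A b c K \<noteq> {}"
    and Y_ne: "dual_sol A b c K \<noteq> {}"
    and X_cpt: "compact (primal_sol A b c K)"
    and xs: "xs \<in> primal_sol A b c K"
    and ys: "ys \<in> dual_sol A b c K"
    and gap: "c \<bullet> xs = b \<bullet> ys"
    and dsc: "xs \<in> rel_interior (comp_face K (c - adjoint A ys))"
  shows "(\<exists>\<gamma> \<gamma>'. \<gamma> \<ge> 0 \<and> \<gamma>' \<ge> 0 \<and>
            (\<forall>x \<in> comp_space K (c - adjoint A ys).
               infdist x (primal_sol A b c K)
                 \<le> \<gamma> * norm (A x - b) + \<gamma>' * infdist x (comp_face K (c - adjoint A ys))))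
       \<and> ((\<exists>x0. primal_sol A b c K = {x0}) \<longrightarrow>
            (\<forall>x \<in> comp_space K (c - adjoint A ys).
               infdist x (primal_sol A b c K)
                 \<le> (1 / sigma_min A (comp_space K (c - adjoint A ys))) * norm (A x - b)))"
proof -
  define s where "s = c - adjoint A ys"
  define F where "F = comp_face K s"
  define X where "X = primal_sol A b c K"
  have Kc: "cone K" "convex K" "closed K" using cone unfolding proper_cone_def by auto
  have sdual: "s \<in> dual_cone K" using ys unfolding s_def dual_sol_def by auto
  have key: "c \<bullet> x - b \<bullet> ys = x \<bullet> s" if "A x = b" for x
  proof -
    have "b \<bullet> ys = x \<bullet> adjoint A ys" using that adjoint_works[OF lin] by simp
    thus ?thesis unfolding s_def by (metis inner_diff_right inner_commute)
  qed
  have xsK: "xs \<in> K" and Axs: "A xs = b" using xs unfolding primal_sol_def by auto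
  have XF: "X = {x\<in>F. A x = b}"
  proof (intro set_eqI iffI)
    fix x assume x: "x \<in> X"
    hence xK: "x \<in> K" and Ax: "A x = b" and le: "c \<bullet> x \<le> c \<bullet> xs"
      using xsK Axs unfolding X_def primal_sol_def by auto
    have "x \<bullet> s \<ge> 0" using sdual xK unfolding dual_cone_def by (auto simp: inner_commute)
    moreover have "x \<bullet> s \<le> 0" using key[OF Ax] le gap by simp
    ultimately show "x \<in> {x\<in>F. A x = b}" using xK Ax unfolding F_def comp_face_def by auto
  next
    fix x assume x: "x \<in> {x\<in>F. A x = b}"
    hence xK: "x \<in> K" and Ax: "A x = b" and xs0: "x \<bullet> s = 0" unfolding F_def comp_face_def by auto
    have "c \<bullet> x \<le> c \<bullet> z" if "z \<in> K" "A z = b" for z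
    proof -
      have "z \<bullet> s \<ge> 0" using sdual that unfolding dual_cone_def by (auto simp: inner_commute)
      thus ?thesis using key[OF Ax] key[OF that(2)] xs0 by simp
    qed
    thus "x \<in> X" using xK Ax unfolding X_def primal_sol_def by auto
  qed
  have xsX: "xs \<in> X" using xs unfolding X_def by simp
  have xsF: "xs \<in> F" using xsX XF by auto
  have cvxF: "convex F" unfolding F_def comp_face_def
  proof -
    have "{x \<in> K. x \<bullet> s = 0} = K \<inter> {x. s \<bullet> x = 0}" by (auto simp: inner_commute)
    thus "convex {x \<in> K. x \<bullet> s = 0}" using Kc by (simp add: convex_Int convex_hyperplane)
  qed
  have clF: "closed F" unfolding F_def comp_face_def
  proof -
    have "{x \<in> K. x \<bullet> s = 0} = K \<inter> {x. s \<bullet> x = 0}" by (auto simp: inner_commute)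
    thus "closed {x \<in> K. x \<bullet> s = 0}" using Kc by (simp add: closed_Int closed_hyperplane)
  qed
  have cnF: "c *\<^sub>R d \<in> F" if "d \<in> F" "c \<ge> 0" for d c
    using that Kc(1) unfolding F_def comp_face_def cone_def by auto
  have addF: "d + e \<in> F" if "d \<in> F" "e \<in> F" for d e
  proof -
    have "(1/2) *\<^sub>R d + (1/2) *\<^sub>R e \<in> F" using cvxF that by (intro convexD) auto
    from cnF[OF this, of 2] show ?thesis by (simp add: scaleR_add_right)
  qed
  have zF: "0 \<in> F" using cnF[OF xsF, of 0] by simp
  have affF: "affine hull F = span F"
    by (rule affine_hull_span_0) (meson zF hull_subset subsetD)
  have "xs \<in> rel_interior F" using dsc unfolding F_def s_def .
  then obtain \<delta> where dpos: "\<delta> > 0" and ballF0: "ball xs \<delta> \<inter> affine hull F \<subseteq> F"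
    unfolding mem_rel_interior_ball by blast
  have ballF: "ball xs \<delta> \<inter> span F \<subseteq> F" using ballF0 affF by simp
  have bX: "bounded X" using X_cpt unfolding X_def by (rule compact_imp_bounded)
  have noRec: "d = 0" if d: "d \<in> F" "A d = 0" for d
  proof (rule ccontr)
    assume dn: "d \<noteq> 0"
    obtain B where B: "\<forall>x\<in>X. norm x \<le> B" using bX bounded_iff by blast
    define t where "t = (\<bar>B\<bar> + norm xs + 1) / norm d"
    have t0: "t \<ge> 0" unfolding t_def by simp
    have "xs + t *\<^sub>R d \<in> X" unfolding XF using addF[OF xsF cnF[OF d(1) t0]] Axs d lin
      by (simp add: linear_add linear_cmul)
    hence "norm (xs + t *\<^sub>R d) \<le> B" using B by blast
    moreover have "norm (t *\<^sub>R d) = \<bar>B\<bar> + norm xs + 1" unfolding t_def using dn by simp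
    moreover have "norm (t *\<^sub>R d) \<le> norm (xs + t *\<^sub>R d) + norm xs"
      by (metis add.commute add_diff_cancel_left' norm_triangle_ineq4 )
    ultimately show False by linarith
  qed
  obtain \<mu> where mpos: "\<mu> > 0" and mu: "\<forall>d\<in>F. \<mu> * norm d \<le> norm (A d)"
    using cone_bound_below[OF clF cnF lin noRec] by blast
  obtain \<kappa> where kpos: "\<kappa> > 0" and rinv: "\<forall>v\<in>span F. \<exists>w\<in>span F. A w = A v \<and> norm w \<le> \<kappa> * norm (A v)"
    using right_inv_bound[OF subspace_span lin] by blast
  obtain \<gamma> where g0: "\<gamma> \<ge> 0" and gb: "\<forall>p\<in>F. infdist p {x\<in>F. A x = b} \<le> \<gamma> * norm (A p - b)"
    using core_bound[OF cvxF lin xsF Axs dpos ballF kpos rinv mpos mu] by blast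
  obtain Bn where Bn: "Bn > 0" "\<And>x. norm (A x) \<le> Bn * norm x" using linear_bounded_pos[OF lin] by blast
  have part1: "infdist x X \<le> \<gamma> * norm (A x - b) + (1 + \<gamma> * Bn) * infdist x F" for x
  proof -
    obtain p where pF: "p \<in> F" and dp: "infdist x F = dist x p"
      using infdist_attains_inf[OF clF] zF by blast
    have "infdist x X \<le> infdist p X + dist x p" by (rule infdist_triangle)
    also have "infdist p X \<le> \<gamma> * norm (A p - b)" using gb pF XF by simp
    also have "norm (A p - b) \<le> norm (A x - b) + Bn * dist x p"
    proof -
      have "A p - b = (A x - b) + A (p - x)" using lin by (simp add: linear_diff)
      hence "norm (A p - b) \<le> norm (A x - b) + norm (A (p - x))" by (metis norm_triangle_ineq)
      also have "norm (A (p - x)) \<le> Bn * dist x p" using Bn(2)[of "p - x"] by (simp add: dist_norm norm_minus_commute)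
      finally show ?thesis by simp
    qed
    hence "\<gamma> * norm (A p - b) \<le> \<gamma> * (norm (A x - b) + Bn * dist x p)" using g0 by (intro mult_left_mono)
    finally show ?thesis unfolding dp by (simp add: algebra_simps)
  qed
  have part2: "infdist x X \<le> (1 / sigma_min A (span F)) * norm (A x - b)"
    if single: "X = {x0}" and xV: "x \<in> span F" for x x0
  proof -
    have x0: "x0 = xs" using single xsX by auto
    have inj: "\<forall>v\<in>span F. A v = 0 \<longrightarrow> v = 0"
    proof (intro ballI impI, rule ccontr)
      fix v assume v: "v \<in> span F" "A v = 0" "v \<noteq> 0"
      define y where "y = xs + (\<delta> / 2 / norm v) *\<^sub>R v"
      have "norm (y - xs) = \<delta> / 2" unfolding y_def using v dpos by simp
      hence "y \<in> ball xs \<delta>" using dpos by (simp add: dist_norm norm_minus_commute)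
      moreover have "y \<in> span F" unfolding y_def using v xsF by (simp add: span_base span_add span_scale)
      ultimately have "y \<in> F" using ballF by blast
      moreover have "A y = b" unfolding y_def using lin v Axs by (simp add: linear_add linear_cmul)
      ultimately have "y \<in> X" using XF by simp
      hence "y = xs" using single x0 by simp
      hence "(\<delta> / 2 / norm v) *\<^sub>R v = 0" unfolding y_def by simp
      thus False using v dpos by simp
    qed
    obtain e where e: "e > 0" "\<forall>v\<in>span F. norm (A v) \<ge> e * norm v"
      using injective_imp_isometric[OF closed_subspace[OF subspace_span] subspace_span _ inj]
        lin linear_conv_bounded_linear by blast
    define u where "u = x - xs"
    have uV: "u \<in> span F" unfolding u_def using xV xsF by (simp add: span_base span_diff)
    have Au: "A u = A x - b" unfolding u_def using lin Axs by (simp add: linear_diff)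
    show ?thesis
    proof (cases "u = 0")
      case True
      then have "x = xs" unfolding u_def by simp
      then show ?thesis using single x0 Axs by simp
    next
      case False
      define U where "U = (\<lambda>x. norm (A x)) ` {x \<in> span F. norm x = 1}"
      have uU: "norm (A ((1/norm u) *\<^sub>R u)) \<in> U" unfolding U_def using uV False
        by (auto simp: span_scale)
      have bdd: "bdd_below U" unfolding U_def by (rule bdd_belowI[of _ 0]) auto
      have sge: "sigma_min A (span F) \<ge> e" unfolding sigma_min_def U_def[symmetric]
        by (rule cInf_greatest) (use uU e in \<open>auto simp: U_def\<close>)
      have sle: "sigma_min A (span F) \<le> norm (A u) / norm u"
        unfolding sigma_min_def U_def[symmetric]
        using cInf_lower[OF uU bdd] lin by (simp add: linear_cmul)
      have "infdist x X = norm u" using single x0 by (simp add: u_def dist_norm)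
      also have "\<dots> \<le> norm (A u) / sigma_min A (span F)"
        using sle sge e False by (simp add: field_simps)
      finally show ?thesis using Au by simp
    qed
  qed
  have V: "comp_space K s = span F" unfolding comp_space_def using affF
    unfolding F_def by simp
  show ?thesis unfolding V F_def[symmetric] s_def[symmetric] X_def[symmetric]
  proof (intro conjI impI)
    show "\<exists>\<gamma> \<gamma>'. \<gamma> \<ge> 0 \<and> \<gamma>' \<ge> 0 \<and> (\<forall>x\<in>span F. infdist x X \<le> \<gamma> * norm (A x - b) + \<gamma>' * infdist x F)"
      using part1 g0 Bn by (intro exI[of _ \<gamma>] exI[of _ "1 + \<gamma> * Bn"]) auto
    show "\<exists>x0. X = {x0} \<Longrightarrow> \<forall>x\<in>span F. infdist x X \<le> 1 / sigma_min A (span F) * norm (A x - b)"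
      using part2 by blast
  qed
qed
end
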